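(* Let $A=\prod_{i=1}^n A_i$ where each $A_i$ is either $\mathsf P^1$ or $\mathbb F_2$, equipped with the product bicharacter. Let $\mathcal G,\mathcal M\subseteq A$ be subgroups (gauge group and measurement group) with $\mathcal G\subseteq\mathcal M^\perp$. Let $\Gamma\subseteq 2^{[n]}$ and let $P=\mathop{\ast}_{\gamma\in\Gamma}P_\gamma$ be a probability distribution on $A$, where each $P_\gamma$ is a probability distribution on $A$ with $P_\gamma(e)=0$ unless $\operatorname{supp}(e)\subseteq\gamma$. Suppose $P$ is correctable, meaning: (1) for all $\gamma_1,\gamma_2\in\Gamma$, $\gamma_1\cup\gamma_2$ is a correctable region, and (2) all moments $E(a)=\sum_{e\in A}\langle a,e\rangle P(e)$ are positive for all $a\in A$. Then the logical channel $P_L(e)=\frac{1}{|\mathcal G|}\sum_{s\in\mathcal G}P(es)$ is uniquely determined by the moments $E(s)$, $s\in\mathcal M$; i.e. any two correctable channels with the same $\Gamma$ whose moments agree on $\mathcal M$ have the same logical channel.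
   Context: $\mathsf P^1$ is the single-qubit Pauli group modulo phases, $\{I,X,Y,Z\}$, with bicharacter $\langle a,b\rangle=+1$ if $a,b$ commute and $-1$ otherwise; on $\mathbb F_2$ the bicharacter is $\langle x,y\rangle=(-1)^{xy}$. The product bicharacter on $A$ is $\langle a,b\rangle=\prod_i\langle a_i,b_i\rangle$. For a subgroup $B\subseteq A$, $B^\perp=\{a\in A:\langle a,b\rangle=1\ \forall b\in B\}$. The support of $a\in A$ is $\{i:a_i\neq I\}$ (identity element). A region $R\subseteq[n]$ is correctable if every $e\in\mathcal M^\perp$ with $\operatorname{supp}(e)\subseteq R$ lies in $\mathcal G$. Convolution: $(f\ast g)(a)=\sum_{b\in A}f(b)g(ab^{-1})$. *)

theory Defs
  imports Complex_Main
begin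

text \<open>The single-qubit Pauli group modulo phases.\<close>
datatype pauli = PI | PX | PY | PZ

fun pmul :: "pauli \<Rightarrow> pauli \<Rightarrow> pauli" where
  "pmul PI q = q"
| "pmul p PI = p"
| "pmul PX PX = PI" | "pmul PX PY = PZ" | "pmul PX PZ = PY"
| "pmul PY PX = PZ" | "pmul PY PY = PI" | "pmul PY PZ = PX"
| "pmul PZ PX = PY" | "pmul PZ PY = PX" | "pmul PZ PZ = PI"

definition pcommute :: "pauli \<Rightarrow> pauli \<Rightarrow> bool" where
  "pcommute p q \<longleftrightarrow> p = PI \<or> q = PI \<or> p = q"

text \<open>A site value is either an element of P^1 or of F_2 (False = 0, True = 1).\<close>
datatype site = Pa pauli | Fb bool

fun smul :: "site \<Rightarrow> site \<Rightarrow> site" where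
  "smul (Pa p) (Pa q) = Pa (pmul p q)"
| "smul (Fb x) (Fb y) = Fb (x \<noteq> y)"
| "smul _ _ = Pa PI"   \<comment> \<open>never used: kinds never mix\<close>

fun sbich :: "site \<Rightarrow> site \<Rightarrow> real" where
  "sbich (Pa p) (Pa q) = (if pcommute p q then 1 else -1)"
| "sbich (Fb x) (Fb y) = (if x \<and> y then -1 else 1)"
| "sbich _ _ = 1"

text \<open>K i = True means A_i = P^1, K i = False means A_i = F_2, for i < n.
  Elements of A are functions nat => site; coordinates i >= n are fixed to Pa PI.\<close>

type_synonym elt = "nat \<Rightarrow> site"

definition carrierA :: "nat \<Rightarrow> (nat \<Rightarrow> bool) \<Rightarrow> elt set" where
  "carrierA n K = {a. (\<forall>i<n. (K i \<longrightarrow> (\<exists>p. a i = Pa p)) \<and> (\<not> K i \<longrightarrow> (\<exists>x. a i = Fb x)))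
                     \<and> (\<forall>i\<ge>n. a i = Pa PI)}"

definition oneA :: "nat \<Rightarrow> (nat \<Rightarrow> bool) \<Rightarrow> elt" where
  "oneA n K = (\<lambda>i. if i < n \<and> \<not> K i then Fb False else Pa PI)"

definition amul :: "elt \<Rightarrow> elt \<Rightarrow> elt" where
  "amul a b = (\<lambda>i. smul (a i) (b i))"

text \<open>Every element is its own inverse.\<close>
definition ainv :: "elt \<Rightarrow> elt" where
  "ainv a = a"

definition bich :: "nat \<Rightarrow> elt \<Rightarrow> elt \<Rightarrow> real" where
  "bich n a b = (\<Prod>i<n. sbich (a i) (b i))"

definition is_subgroup :: "nat \<Rightarrow> (nat \<Rightarrow> bool) \<Rightarrow> elt set \<Rightarrow> bool" where
  "is_subgroup n K H \<longleftrightarrow> H \<subseteq> carrierA n K \<and> oneA n K \<in> H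
     \<and> (\<forall>a\<in>H. \<forall>b\<in>H. amul a b \<in> H) \<and> (\<forall>a\<in>H. ainv a \<in> H)"

definition perp :: "nat \<Rightarrow> (nat \<Rightarrow> bool) \<Rightarrow> elt set \<Rightarrow> elt set" where
  "perp n K B = {a \<in> carrierA n K. \<forall>b\<in>B. bich n a b = 1}"

definition supp :: "nat \<Rightarrow> elt \<Rightarrow> nat set" where
  "supp n a = {i. i < n \<and> a i \<noteq> Pa PI \<and> a i \<noteq> Fb False}"

definition correctable_region ::
  "nat \<Rightarrow> (nat \<Rightarrow> bool) \<Rightarrow> elt set \<Rightarrow> elt set \<Rightarrow> nat set \<Rightarrow> bool" where
  "correctable_region n K G M R \<longleftrightarrow>
     (\<forall>e\<in>perp n K M. supp n e \<subseteq> R \<longrightarrow> e \<in> G)"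

definition prob_dist :: "nat \<Rightarrow> (nat \<Rightarrow> bool) \<Rightarrow> (elt \<Rightarrow> real) \<Rightarrow> bool" where
  "prob_dist n K p \<longleftrightarrow> (\<forall>e\<in>carrierA n K. 0 \<le> p e) \<and> (\<Sum>e\<in>carrierA n K. p e) = 1"

definition conv :: "nat \<Rightarrow> (nat \<Rightarrow> bool) \<Rightarrow> (elt \<Rightarrow> real) \<Rightarrow> (elt \<Rightarrow> real) \<Rightarrow> elt \<Rightarrow> real" where
  "conv n K f g a = (if a \<in> carrierA n K
      then (\<Sum>b\<in>carrierA n K. f b * g (amul a (ainv b))) else 0)"

definition delta_one :: "nat \<Rightarrow> (nat \<Rightarrow> bool) \<Rightarrow> elt \<Rightarrow> real" where
  "delta_one n K a = (if a = oneA n K then 1 else 0)"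

text \<open>Convolution of a finite family (given as a list enumerating it; the
  empty convolution is the point mass at the identity).\<close>
definition conv_list :: "nat \<Rightarrow> (nat \<Rightarrow> bool) \<Rightarrow> (elt \<Rightarrow> real) list \<Rightarrow> elt \<Rightarrow> real" where
  "conv_list n K fs = foldr (conv n K) fs (delta_one n K)"

definition moment :: "nat \<Rightarrow> (nat \<Rightarrow> bool) \<Rightarrow> (elt \<Rightarrow> real) \<Rightarrow> elt \<Rightarrow> real" where
  "moment n K P a = (\<Sum>e\<in>carrierA n K. bich n a e * P e)"

definition logical_channel :: "elt set \<Rightarrow> (elt \<Rightarrow> real) \<Rightarrow> elt \<Rightarrow> real" where
  "logical_channel G P e = (1 / real (card G)) * (\<Sum>s\<in>G. P (amul e s))"

text \<open>A channel P = conv over gamma in Gamma of P_gamma, with Gamma enumerated by gs.\<close>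
definition local_family ::
  "nat \<Rightarrow> (nat \<Rightarrow> bool) \<Rightarrow> nat set list \<Rightarrow> (nat set \<Rightarrow> elt \<Rightarrow> real) \<Rightarrow> bool" where
  "local_family n K gs Pg \<longleftrightarrow> (\<forall>\<gamma>\<in>set gs. prob_dist n K (Pg \<gamma>)
      \<and> (\<forall>e\<in>carrierA n K. \<not> supp n e \<subseteq> \<gamma> \<longrightarrow> Pg \<gamma> e = 0))"

definition channel :: "nat \<Rightarrow> (nat \<Rightarrow> bool) \<Rightarrow> nat set list \<Rightarrow> (nat set \<Rightarrow> elt \<Rightarrow> real) \<Rightarrow> elt \<Rightarrow> real" where
  "channel n K gs Pg = conv_list n K (map Pg gs)"

end

theory Submission
  imports Defs
begin


definition kd :: "nat \<Rightarrow> (nat \<Rightarrow> bool) \<Rightarrow> nat \<Rightarrow> bool" where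
  "kd n K i = (n \<le> i \<or> K i)"

definition sok :: "bool \<Rightarrow> site \<Rightarrow> bool" where
  "sok k s = (case s of Pa _ \<Rightarrow> k | Fb _ \<Rightarrow> \<not> k)"

definition sone :: "bool \<Rightarrow> site" where
  "sone k = (if k then Pa PI else Fb False)"

lemma pmul_comm: "pmul p q = pmul q p"
  by (cases p; cases q) auto
lemma pmul_assoc: "pmul (pmul p q) r = pmul p (pmul q r)"
  by (cases p; cases q; cases r) auto
lemma pmul_self[simp]: "pmul p p = PI"
  by (cases p) auto
lemma pmul_PI[simp]: "pmul p PI = p"
  by (cases p) auto
lemma pcomm_sym: "pcommute p q = pcommute q p"
  by (auto simp: pcommute_def)
lemma pcomm_mult: "((if pcommute p (pmul q r) then 1 else -1)::real) =
   (if pcommute p q then 1 else -1) * (if pcommute p r then 1 else -1)"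
  by (cases p; cases q; cases r) (auto simp: pcommute_def)
lemma pcomm_wit: "q \<noteq> PI \<Longrightarrow> \<exists>p. \<not> pcommute p q"
  by (cases q) (auto simp: pcommute_def intro: exI[of _ PX] exI[of _ PZ])

lemma smul_comm: "smul s t = smul t s"
  by (cases s; cases t) (auto simp: pmul_comm)
lemma smul_assoc: "sok k s \<Longrightarrow> sok k t \<Longrightarrow> sok k u \<Longrightarrow> smul (smul s t) u = smul s (smul t u)"
  by (cases s; cases t; cases u) (auto simp: sok_def pmul_assoc)
lemma smul_self: "sok k s \<Longrightarrow> smul s s = sone k"
  by (cases s) (auto simp: sok_def sone_def)
lemma smul_one: "sok k s \<Longrightarrow> smul s (sone k) = s"
  by (cases s) (auto simp: sok_def sone_def)
lemma smul_ok: "sok k s \<Longrightarrow> sok k t \<Longrightarrow> sok k (smul s t)"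
  by (cases s; cases t) (auto simp: sok_def)
lemma sone_ok: "sok k (sone k)"
  by (auto simp: sok_def sone_def)
lemma sbich_sym: "sbich s t = sbich t s"
  by (cases s; cases t) (auto simp: pcomm_sym)
lemma sbich_mult: "sok k s \<Longrightarrow> sok k t \<Longrightarrow> sok k u \<Longrightarrow> sbich s (smul t u) = sbich s t * sbich s u"
  by (cases s; cases t; cases u) (auto simp: sok_def pcomm_mult)
lemma sbich_PI[simp]: "sbich s (Pa PI) = 1"
  by (cases s) (auto simp: pcommute_def)
lemma sbich_FF[simp]: "sbich s (Fb False) = 1"
  by (cases s) (auto)
lemma sbich_one: "sbich s (sone k) = 1"
  by (auto simp: sone_def)
lemma sbich_sq: "sbich s t * sbich s t = 1"
  by (cases s; cases t) auto
lemma sbich_pm: "sbich s t = 1 \<or> sbich s t = -1"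
  by (cases s; cases t) auto
lemma sbich_wit: "sok k t \<Longrightarrow> t \<noteq> sone k \<Longrightarrow> \<exists>s. sok k s \<and> sbich s t = -1"
proof (cases t)
  case (Pa q)
  assume "sok k t" "t \<noteq> sone k"
  then have "k" "q \<noteq> PI" using Pa by (auto simp: sok_def sone_def)
  then obtain p where "\<not> pcommute p q" using pcomm_wit by blast
  then show ?thesis using Pa \<open>k\<close> by (intro exI[of _ "Pa p"]) (auto simp: sok_def)
next
  case (Fb x)
  assume "sok k t" "t \<noteq> sone k"
  then have "\<not> k" "x" using Fb by (auto simp: sok_def sone_def)
  then show ?thesis using Fb by (intro exI[of _ "Fb True"]) (auto simp: sok_def)
qed



lemma carrier_iff: "a \<in> carrierA n K \<longleftrightarrow> (\<forall>i. sok (kd n K i) (a i)) \<and> (\<forall>i\<ge>n. a i = Pa PI)"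
proof
  assume a: "a \<in> carrierA n K"
  show "(\<forall>i. sok (kd n K i) (a i)) \<and> (\<forall>i\<ge>n. a i = Pa PI)"
  proof (intro conjI allI impI)
    fix i show "sok (kd n K i) (a i)"
      using a by (cases "i < n") (auto simp: carrierA_def kd_def sok_def)
  qed (use a in \<open>auto simp: carrierA_def\<close>)
next
  assume a: "(\<forall>i. sok (kd n K i) (a i)) \<and> (\<forall>i\<ge>n. a i = Pa PI)"
  have "K i \<longrightarrow> (\<exists>p. a i = Pa p)" "\<not> K i \<longrightarrow> (\<exists>x. a i = Fb x)" if "i < n" for i
    using a[THEN conjunct1, rule_format, of i] that by (cases "a i"; auto simp: sok_def kd_def)+
  then show "a \<in> carrierA n K" using a by (auto simp: carrierA_def)
qed

lemma oneA_eq: "oneA n K i = sone (kd n K i)"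
  by (auto simp: oneA_def sone_def kd_def)

lemma one_in: "oneA n K \<in> carrierA n K"
  by (auto simp: carrier_iff oneA_eq sone_ok) (auto simp: kd_def sone_def)

lemma mul_in: "a \<in> carrierA n K \<Longrightarrow> b \<in> carrierA n K \<Longrightarrow> amul a b \<in> carrierA n K"
  by (auto simp: carrier_iff amul_def smul_ok)

lemma amul_comm: "amul a b = amul b a"
  by (auto simp: amul_def smul_comm)

lemma amul_assoc: "a \<in> carrierA n K \<Longrightarrow> b \<in> carrierA n K \<Longrightarrow> c \<in> carrierA n K \<Longrightarrow>
   amul (amul a b) c = amul a (amul b c)"
  by (auto simp: carrier_iff amul_def intro!: smul_assoc)

lemma amul_self: "a \<in> carrierA n K \<Longrightarrow> amul a a = oneA n K"
  by (rule ext) (auto simp: carrier_iff amul_def oneA_eq intro!: smul_self)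

lemma amul_one: "a \<in> carrierA n K \<Longrightarrow> amul a (oneA n K) = a"
  by (auto simp: carrier_iff amul_def oneA_eq intro!: smul_one)

lemma amul_cancel: "a \<in> carrierA n K \<Longrightarrow> b \<in> carrierA n K \<Longrightarrow> amul (amul a b) b = a"
  by (simp add: amul_assoc amul_self amul_one)

lemma amul_eq_one: "a \<in> carrierA n K \<Longrightarrow> b \<in> carrierA n K \<Longrightarrow> amul a b = oneA n K \<longleftrightarrow> a = b"
  by (metis amul_cancel amul_comm amul_one amul_self one_in)

lemma finite_C: "finite (carrierA n K)"
proof -
  define S where "S = {Pa PI, Pa PX, Pa PY, Pa PZ, Fb True, Fb False}"
  have allS: "s \<in> S" for s
  proof (cases s) case (Pa p) then show ?thesis by (cases p) (auto simp: S_def) qed (auto simp: S_def)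
  have fS: "finite S" unfolding S_def by simp
  have f1: "finite {xs. set xs \<subseteq> S \<and> length xs = n}" by (rule finite_lists_length_eq[OF fS])
  have sub: "(\<lambda>a. map a [0..<n]) ` carrierA n K \<subseteq> {xs. set xs \<subseteq> S \<and> length xs = n}"
    using allS by auto
  have inj: "inj_on (\<lambda>a. map a [0..<n]) (carrierA n K)"
  proof
    fix a b assume ab: "a \<in> carrierA n K" "b \<in> carrierA n K" "map a [0..<n] = map b [0..<n]"
    show "a = b"
    proof
      fix i show "a i = b i"
      proof (cases "i < n")
        case True then show ?thesis using ab(3) map_eq_conv[of a "[0..<n]" b] by simp
      next
        case False then show ?thesis using ab(1,2) by (simp add: carrier_iff)
      qed
    qed
  qed
  have "finite ((\<lambda>a. map a [0..<n]) ` carrierA n K)" using f1 sub by (rule finite_subset[rotated])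
  then show ?thesis using inj by (simp add: finite_image_iff)
qed

lemma card_C_pos: "card (carrierA n K) > 0"
  using finite_C one_in card_gt_0_iff by blast

lemma bich_sym: "bich n a b = bich n b a"
  by (simp add: bich_def sbich_sym)

lemma bich_mult: "a \<in> carrierA n K \<Longrightarrow> b \<in> carrierA n K \<Longrightarrow> c \<in> carrierA n K \<Longrightarrow>
   bich n a (amul b c) = bich n a b * bich n a c"
  by (auto simp: bich_def amul_def carrier_iff prod.distrib[symmetric] intro!: prod.cong sbich_mult)

lemma bich_mult1: "a \<in> carrierA n K \<Longrightarrow> b \<in> carrierA n K \<Longrightarrow> c \<in> carrierA n K \<Longrightarrow>
   bich n (amul b c) a = bich n b a * bich n c a"
  by (metis bich_mult bich_sym)

lemma bich_one[simp]: "bich n a (oneA n K) = 1"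
  by (simp add: bich_def oneA_eq sbich_one)

lemma bich_one1[simp]: "bich n (oneA n K) a = 1"
  by (metis bich_one bich_sym)

lemma bich_sq: "bich n a b * bich n a b = 1"
  by (simp add: bich_def prod.distrib[symmetric] sbich_sq)

lemma bich_pm: "bich n a b \<noteq> 1 \<Longrightarrow> bich n a b = -1"
  by (metis bich_sq mult_cancel_left1 square_eq_1_iff)

lemma sone_iff: "sok k s \<Longrightarrow> (s \<noteq> Pa PI \<and> s \<noteq> Fb False) \<longleftrightarrow> s \<noteq> sone k"
  by (cases s) (auto simp: sok_def sone_def)

lemma supp_C: "a \<in> carrierA n K \<Longrightarrow> supp n a = {i. i < n \<and> a i \<noteq> oneA n K i}"
proof -
  assume "a \<in> carrierA n K"
  then have ok: "\<And>i. sok (kd n K i) (a i)" by (simp add: carrier_iff)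
  show ?thesis unfolding supp_def oneA_eq
  proof (rule Collect_cong)
    fix i show "(i < n \<and> a i \<noteq> Pa PI \<and> a i \<noteq> Fb False) = (i < n \<and> a i \<noteq> sone (kd n K i))"
      using sone_iff[OF ok[of i]] by blast
  qed
qed



lemma C_sub: "is_subgroup n K (carrierA n K)"
  unfolding is_subgroup_def using one_in mul_in by (simp add: ainv_def)

lemma sub_C: "is_subgroup n K H \<Longrightarrow> x \<in> H \<Longrightarrow> x \<in> carrierA n K"
  unfolding is_subgroup_def by blast

lemma sub_fin: "is_subgroup n K H \<Longrightarrow> finite H"
  unfolding is_subgroup_def using finite_C by (meson finite_subset)

lemma sub_mul: "is_subgroup n K H \<Longrightarrow> x \<in> H \<Longrightarrow> y \<in> H \<Longrightarrow> amul x y \<in> H"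
  unfolding is_subgroup_def by blast

lemma sub_one: "is_subgroup n K H \<Longrightarrow> oneA n K \<in> H"
  unfolding is_subgroup_def by blast

lemma sub_card_pos: "is_subgroup n K H \<Longrightarrow> card H > 0"
  using sub_fin sub_one card_gt_0_iff by blast

lemma shift_sub:
  assumes H: "is_subgroup n K H" and b: "b \<in> H"
  shows "(\<Sum>x\<in>H. f (amul x b)) = (\<Sum>x\<in>H. f x)"
proof -
  have bC: "b \<in> carrierA n K" using sub_C[OF H b] .
  show ?thesis
  by (rule sum.reindex_bij_witness[where i="\<lambda>x. amul x b" and j="\<lambda>x. amul x b"])
     (auto simp: sub_mul[OF H] b intro: amul_cancel[OF sub_C[OF H] bC])
qed

lemma shift_sum:
  "b \<in> carrierA n K \<Longrightarrow> (\<Sum>x\<in>carrierA n K. f (amul x b)) = (\<Sum>x\<in>carrierA n K. f x)"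
  using shift_sub[OF C_sub] by blast

lemma ortho_sub:
  assumes H: "is_subgroup n K H" and x: "x \<in> carrierA n K"
  shows "(\<Sum>m\<in>H. bich n m x) = (if \<forall>m\<in>H. bich n m x = 1 then real (card H) else 0)"
proof (cases "\<forall>m\<in>H. bich n m x = 1")
  case True then show ?thesis by simp
next
  case False
  then obtain m0 where m0: "m0 \<in> H" "bich n m0 x \<noteq> 1" by blast
  then have mm: "bich n m0 x = -1" by (simp add: bich_pm)
  have "(\<Sum>m\<in>H. bich n m x) = (\<Sum>m\<in>H. bich n (amul m m0) x)"
    using shift_sub[OF H m0(1), of "\<lambda>m. bich n m x"] by simp
  also have "\<dots> = (\<Sum>m\<in>H. bich n m x * bich n m0 x)"
    using sub_C[OF H] m0(1) x by (intro sum.cong refl bich_mult1) auto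
  also have "\<dots> = - (\<Sum>m\<in>H. bich n m x)" by (simp add: mm sum_negf)
  finally have "(\<Sum>m\<in>H. bich n m x) = 0" by simp
  then show ?thesis by (simp only: if_not_P[OF False])
qed

lemma sbich_sone1: "sbich (sone k) t = 1"
  by (metis sbich_one sbich_sym)

lemma witness:
  assumes e: "e \<in> carrierA n K" and i: "i \<in> supp n e"
  shows "\<exists>b\<in>carrierA n K. (\<forall>j. j \<noteq> i \<longrightarrow> b j = oneA n K j) \<and> bich n b e = -1"
proof -
  have "i < n" "e i \<noteq> oneA n K i" using i supp_C[OF e] by auto
  moreover have "sok (kd n K i) (e i)" using e by (simp add: carrier_iff)
  ultimately obtain s where s: "sok (kd n K i) s" "sbich s (e i) = -1"
    using sbich_wit oneA_eq by metis
  define b where "b = (oneA n K)(i := s)"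
  have bC: "b \<in> carrierA n K"
    using s(1) one_in \<open>i < n\<close> unfolding b_def carrier_iff by auto
  have "bich n b e = sbich (b i) (e i) * (\<Prod>j\<in>{..<n} - {i}. sbich (b j) (e j))"
    unfolding bich_def using \<open>i < n\<close> by (simp add: prod.remove)
  also have "(\<Prod>j\<in>{..<n} - {i}. sbich (b j) (e j)) = 1"
    by (rule prod.neutral) (auto simp: b_def oneA_eq sbich_sone1)
  also have "sbich (b i) (e i) = -1" using s by (simp add: b_def)
  finally have "bich n b e = -1" by simp
  moreover have "\<forall>j. j \<noteq> i \<longrightarrow> b j = oneA n K j" by (simp add: b_def)
  ultimately show ?thesis using bC by blast
qed

lemma perp_C:
  assumes x: "x \<in> carrierA n K"
  shows "(\<forall>m\<in>carrierA n K. bich n m x = 1) \<longleftrightarrow> x = oneA n K"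
proof
  assume all: "\<forall>m\<in>carrierA n K. bich n m x = 1"
  show "x = oneA n K"
  proof (rule ccontr)
    assume "x \<noteq> oneA n K"
    then obtain i where "x i \<noteq> oneA n K i" by blast
    moreover have "i < n"
    proof (rule ccontr)
      assume "\<not> i < n"
      then have "x i = Pa PI" "oneA n K i = Pa PI" using x by (auto simp: carrier_iff oneA_def)
      then show False using calculation by simp
    qed
    ultimately have "i \<in> supp n x" using supp_C[OF x] by auto
    then obtain b where "b \<in> carrierA n K" "bich n b x = -1" using witness[OF x] by blast
    then show False using all by fastforce
  qed
qed simp

lemma inversion:
  assumes x: "x \<in> carrierA n K"
  shows "(\<Sum>a\<in>carrierA n K. bich n a x * (\<Sum>y\<in>carrierA n K. bich n a y * f y))
         = real (card (carrierA n K)) * f x"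
proof -
  let ?C = "carrierA n K"
  have "(\<Sum>a\<in>?C. bich n a x * (\<Sum>y\<in>?C. bich n a y * f y))
        = (\<Sum>a\<in>?C. \<Sum>y\<in>?C. f y * bich n a (amul x y))"
  proof (rule sum.cong[OF refl])
    fix a assume a: "a \<in> ?C"
    show "bich n a x * (\<Sum>y\<in>?C. bich n a y * f y) = (\<Sum>y\<in>?C. f y * bich n a (amul x y))"
      unfolding sum_distrib_left
    proof (rule sum.cong[OF refl])
      fix y assume y: "y \<in> ?C"
      show "bich n a x * (bich n a y * f y) = f y * bich n a (amul x y)"
        using bich_mult[OF a x y] by simp
    qed
  qed
  also have "\<dots> = (\<Sum>y\<in>?C. f y * (\<Sum>a\<in>?C. bich n a (amul x y)))"
    by (subst sum.swap) (simp add: sum_distrib_left)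
  also have "\<dots> = (\<Sum>y\<in>?C. if y = x then real (card ?C) * f x else 0)"
  proof (rule sum.cong[OF refl])
    fix y assume y: "y \<in> ?C"
    have xy: "amul x y \<in> ?C" using mul_in[OF x y] .
    have "(\<Sum>a\<in>?C. bich n a (amul x y)) = (if y = x then real (card ?C) else 0)"
      unfolding ortho_sub[OF C_sub xy] perp_C[OF xy] amul_eq_one[OF x y] by auto
    then show "f y * (\<Sum>a\<in>?C. bich n a (amul x y)) = (if y = x then real (card ?C) * f x else 0)"
      by simp
  qed
  also have "\<dots> = real (card ?C) * f x" using x by (simp add: finite_C)
  finally show ?thesis .
qed

lemma locality:
  assumes f: "\<And>a a'. a \<in> carrierA n K \<Longrightarrow> a' \<in> carrierA n K \<Longrightarrow> (\<forall>i\<in>g. a i = a' i) \<Longrightarrow> f a = f a'"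
    and e: "e \<in> carrierA n K" and ns: "\<not> supp n e \<subseteq> g"
  shows "(\<Sum>a\<in>carrierA n K. f a * bich n a e) = 0"
proof -
  obtain i where i: "i \<in> supp n e" "i \<notin> g" using ns by blast
  obtain b where b: "b \<in> carrierA n K" "\<forall>j. j \<noteq> i \<longrightarrow> b j = oneA n K j" "bich n b e = -1"
    using witness[OF e i(1)] by blast
  have agree: "f (amul a b) = f a" if a: "a \<in> carrierA n K" for a
  proof (rule f[OF mul_in[OF a b(1)] a])
    show "\<forall>j\<in>g. amul a b j = a j"
    proof
      fix j assume "j \<in> g"
      then have "b j = sone (kd n K j)" using b(2) i(2) oneA_eq by metis
      moreover have "sok (kd n K j) (a j)" using a by (simp add: carrier_iff)
      ultimately show "amul a b j = a j" by (simp add: amul_def smul_one)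
    qed
  qed
  have "(\<Sum>a\<in>carrierA n K. f a * bich n a e) = (\<Sum>a\<in>carrierA n K. f (amul a b) * bich n (amul a b) e)"
    using shift_sum[OF b(1), of "\<lambda>a. f a * bich n a e"] by simp
  also have "\<dots> = (\<Sum>a\<in>carrierA n K. - (f a * bich n a e))"
    using e b(1,3) by (intro sum.cong refl) (auto simp: agree bich_mult1)
  also have "\<dots> = - (\<Sum>a\<in>carrierA n K. f a * bich n a e)" by (simp add: sum_negf)
  finally show ?thesis by simp
qed



lemma conv_inner:
  assumes a: "a \<in> carrierA n K" and b: "b \<in> carrierA n K"
  shows "(\<Sum>x\<in>carrierA n K. bich n a x * g (amul x b)) = bich n a b * moment n K g a"
proof -
  let ?C = "carrierA n K"
  have "(\<Sum>x\<in>?C. bich n a x * g (amul x b)) = (\<Sum>x\<in>?C. bich n a (amul (amul x b) b) * g (amul x b))"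
    using b by (intro sum.cong refl) (simp add: amul_cancel)
  also have "\<dots> = (\<Sum>x\<in>?C. bich n a (amul x b) * g x)"
    using shift_sum[OF b, of "\<lambda>y. bich n a (amul y b) * g y"] by simp
  also have "\<dots> = (\<Sum>x\<in>?C. bich n a b * (bich n a x * g x))"
    using a b by (intro sum.cong refl) (simp add: bich_mult)
  also have "\<dots> = bich n a b * moment n K g a"
    by (simp add: moment_def sum_distrib_left)
  finally show ?thesis .
qed

lemma moment_conv:
  assumes a: "a \<in> carrierA n K"
  shows "moment n K (conv n K f g) a = moment n K f a * moment n K g a"
proof -
  let ?C = "carrierA n K"
  have "moment n K (conv n K f g) a = (\<Sum>x\<in>?C. bich n a x * (\<Sum>b\<in>?C. f b * g (amul x b)))"
    unfolding moment_def conv_def ainv_def by (intro sum.cong refl) simp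
  also have "\<dots> = (\<Sum>x\<in>?C. \<Sum>b\<in>?C. f b * (bich n a x * g (amul x b)))"
    by (simp add: sum_distrib_left mult.left_commute)
  also have "\<dots> = (\<Sum>b\<in>?C. f b * (\<Sum>x\<in>?C. bich n a x * g (amul x b)))"
    by (subst sum.swap) (simp add: sum_distrib_left)
  also have "\<dots> = (\<Sum>b\<in>?C. f b * (bich n a b * moment n K g a))"
    using a by (intro sum.cong refl) (simp add: conv_inner)
  also have "\<dots> = moment n K f a * moment n K g a"
    unfolding moment_def sum_distrib_right by (intro sum.cong refl) (simp add: mult.commute mult.left_commute)
  finally show ?thesis .
qed

lemma moment_delta: "moment n K (delta_one n K) a = 1"
proof -
  have "moment n K (delta_one n K) a = (\<Sum>e\<in>carrierA n K. if e = oneA n K then bich n a e else 0)"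
    unfolding moment_def delta_one_def by (intro sum.cong refl) simp
  also have "\<dots> = 1" using one_in finite_C by simp
  finally show ?thesis .
qed

lemma moment_conv_list:
  assumes a: "a \<in> carrierA n K"
  shows "moment n K (conv_list n K fs) a = (\<Prod>f\<leftarrow>fs. moment n K f a)"
  by (induction fs) (simp_all add: conv_list_def moment_delta moment_conv[OF a])

lemma moment_channel:
  assumes a: "a \<in> carrierA n K" and d: "distinct gs"
  shows "moment n K (channel n K gs Pg) a = (\<Prod>g\<in>set gs. moment n K (Pg g) a)"
  using moment_conv_list[OF a, of "map Pg gs"] d
  by (simp add: channel_def prod.distinct_set_conv_list comp_def)

lemma moment_local:
  assumes loc: "\<forall>e\<in>carrierA n K. \<not> supp n e \<subseteq> g \<longrightarrow> p e = 0"
    and a: "a \<in> carrierA n K" and a': "a' \<in> carrierA n K" and ag: "\<forall>i\<in>g. a i = a' i"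
  shows "moment n K p a = moment n K p a'"
  unfolding moment_def
proof (rule sum.cong[OF refl])
  fix e assume e: "e \<in> carrierA n K"
  show "bich n a e * p e = bich n a' e * p e"
  proof (cases "supp n e \<subseteq> g")
    case True
    have "bich n a e = bich n a' e" unfolding bich_def
    proof (rule prod.cong[OF refl])
      fix i assume i: "i \<in> {..<n}"
      show "sbich (a i) (e i) = sbich (a' i) (e i)"
      proof (cases "i \<in> supp n e")
        case True then show ?thesis using ag \<open>supp n e \<subseteq> g\<close> by auto
      next
        case False
        then have "e i = Pa PI \<or> e i = Fb False" using i by (auto simp: supp_def)
        then show ?thesis by auto
      qed
    qed
    then show ?thesis by simp
  next
    case False then show ?thesis using loc e by simp
  qed
qed



lemma smul_cancel2: "sok k s \<Longrightarrow> sok k t \<Longrightarrow> sok k r \<Longrightarrow> smul (smul s t) (smul s r) = smul t r"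
  by (cases s; cases t; cases r; simp add: sok_def;
      (rename_tac p q w, case_tac p; case_tac q; case_tac w; simp)?)

lemma amul_cancel2: "e \<in> carrierA n K \<Longrightarrow> u \<in> carrierA n K \<Longrightarrow> v \<in> carrierA n K \<Longrightarrow>
  amul (amul e u) (amul e v) = amul u v"
  unfolding carrier_iff amul_def by (metis smul_cancel2)

lemma supp_mul:
  assumes x: "x \<in> carrierA n K" and y: "y \<in> carrierA n K"
  shows "supp n (amul x y) \<subseteq> supp n x \<union> supp n y"
proof
  fix i assume i: "i \<in> supp n (amul x y)"
  show "i \<in> supp n x \<union> supp n y"
  proof (rule ccontr)
    assume "i \<notin> supp n x \<union> supp n y"
    moreover have "i < n" using i by (simp add: supp_def)
    ultimately have "x i = oneA n K i" "y i = oneA n K i" using supp_C[OF x] supp_C[OF y] by auto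
    then have "amul x y i = oneA n K i"
      by (simp add: amul_def oneA_eq smul_self[OF sone_ok])
    then show False using i supp_C[OF mul_in[OF x y]] by auto
  qed
qed

lemma perp_sub:
  assumes M: "is_subgroup n K M"
  shows "is_subgroup n K (perp n K M)"
  unfolding is_subgroup_def
proof (intro conjI ballI)
  show "perp n K M \<subseteq> carrierA n K" by (auto simp: perp_def)
  show "oneA n K \<in> perp n K M" by (simp add: perp_def one_in)
  fix a b assume a: "a \<in> perp n K M" and b: "b \<in> perp n K M"
  have aC: "a \<in> carrierA n K" and bC: "b \<in> carrierA n K" using a b by (auto simp: perp_def)
  have "bich n (amul a b) m = 1" if m: "m \<in> M" for m
    using bich_mult1[OF sub_C[OF M m] aC bC] a b m by (simp add: perp_def)
  then show "amul a b \<in> perp n K M" using mul_in[OF aC bC] by (simp add: perp_def)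
next
  fix a assume "a \<in> perp n K M" then show "ainv a \<in> perp n K M" by (simp add: ainv_def)
qed

lemma lc_formula:
  assumes G: "is_subgroup n K G" and e: "e \<in> carrierA n K"
  shows "real (card (carrierA n K)) * (\<Sum>s\<in>G. p (amul e s)) =
    (\<Sum>a\<in>carrierA n K. if \<forall>s\<in>G. bich n s a = 1 then moment n K p a * bich n a e * real (card G) else 0)"
proof -
  let ?C = "carrierA n K"
  have "real (card ?C) * (\<Sum>s\<in>G. p (amul e s)) = (\<Sum>s\<in>G. real (card ?C) * p (amul e s))"
    by (simp add: sum_distrib_left)
  also have "\<dots> = (\<Sum>s\<in>G. \<Sum>a\<in>?C. bich n a (amul e s) * moment n K p a)"
  proof (rule sum.cong[OF refl])
    fix s assume s: "s \<in> G"
    show "real (card ?C) * p (amul e s) = (\<Sum>a\<in>?C. bich n a (amul e s) * moment n K p a)"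
      using inversion[OF mul_in[OF e sub_C[OF G s]], of p] by (simp add: moment_def)
  qed
  also have "\<dots> = (\<Sum>a\<in>?C. moment n K p a * bich n a e * (\<Sum>s\<in>G. bich n s a))"
    apply (subst sum.swap)
    apply (rule sum.cong[OF refl])
    apply (simp add: sum_distrib_left)
    apply (rule sum.cong[OF refl])
    apply (simp add: bich_mult e sub_C[OF G] bich_sym[of n _ a for a])
    done
  also have "\<dots> = (\<Sum>a\<in>?C. if \<forall>s\<in>G. bich n s a = 1 then moment n K p a * bich n a e * real (card G) else 0)"
    by (rule sum.cong[OF refl]) (simp add: ortho_sub[OF G])
  finally show ?thesis .
qed



theorem theorem2:
  fixes n :: nat and K :: "nat \<Rightarrow> bool"
    and G M :: "elt set" and gs :: "nat set list"
    and Pg Qg :: "nat set \<Rightarrow> elt \<Rightarrow> real"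
  assumes G_sub: "is_subgroup n K G"
    and M_sub: "is_subgroup n K M"
    and G_perp: "G \<subseteq> perp n K M"
    and gs_dist: "distinct gs"
    and Gamma_sub: "set gs \<subseteq> Pow {..<n}"
    and Pg_loc: "local_family n K gs Pg"
    and Qg_loc: "local_family n K gs Qg"
    and corr_reg: "\<forall>\<gamma>1\<in>set gs. \<forall>\<gamma>2\<in>set gs. correctable_region n K G M (\<gamma>1 \<union> \<gamma>2)"
    and P_pos: "\<forall>a\<in>carrierA n K. moment n K (channel n K gs Pg) a > 0"
    and Q_pos: "\<forall>a\<in>carrierA n K. moment n K (channel n K gs Qg) a > 0"
    and agree: "\<forall>s\<in>M. moment n K (channel n K gs Pg) s = moment n K (channel n K gs Qg) s"
  shows "\<forall>e\<in>carrierA n K.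
           logical_channel G (channel n K gs Pg) e = logical_channel G (channel n K gs Qg) e"
proof -
  define C where "C = carrierA n K"
  define N where "N = real (card C)"
  define \<Gamma> where "\<Gamma> = set gs"
  define PM where "PM = perp n K M"
  define mP where "mP = moment n K (channel n K gs Pg)"
  define mQ where "mQ = moment n K (channel n K gs Qg)"
  define D where "D a = ln (mP a) - ln (mQ a)" for a
  define d where "d g a = ln \<bar>moment n K (Pg g) a\<bar> - ln \<bar>moment n K (Qg g) a\<bar>" for g a
  define c where "c e = (\<Sum>a\<in>C. D a * bich n a e)" for e
  have finC: "finite C" unfolding C_def by (rule finite_C)
  have Npos: "N > 0" unfolding N_def C_def using card_C_pos by simp
  have finG: "finite \<Gamma>" unfolding \<Gamma>_def by simp
  have PMsub: "is_subgroup n K PM" unfolding PM_def by (rule perp_sub[OF M_sub])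
  have PMC: "PM \<subseteq> C" unfolding PM_def C_def perp_def by auto

  have lnsum: "ln (moment n K (channel n K gs R) a) = (\<Sum>g\<in>\<Gamma>. ln \<bar>moment n K (R g) a\<bar>)"
    if a: "a \<in> C" and pos: "moment n K (channel n K gs R) a > 0" for R a
  proof -
    have eq: "moment n K (channel n K gs R) a = (\<Prod>g\<in>\<Gamma>. moment n K (R g) a)"
      unfolding \<Gamma>_def using moment_channel[of a n K gs R] a gs_dist C_def by simp
    then have ne: "moment n K (R g) a \<noteq> 0" if "g \<in> \<Gamma>" for g
      using pos that finG by (metis less_irrefl prod_zero_iff)
    have "ln (moment n K (channel n K gs R) a) = ln \<bar>\<Prod>g\<in>\<Gamma>. moment n K (R g) a\<bar>"
      using pos eq by simp
    also have "\<dots> = ln (\<Prod>g\<in>\<Gamma>. \<bar>moment n K (R g) a\<bar>)" by (simp add: abs_prod)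
    also have "\<dots> = (\<Sum>g\<in>\<Gamma>. ln \<bar>moment n K (R g) a\<bar>)"
      using ne finG by (subst ln_prod) auto
    finally show ?thesis .
  qed
  have Dsum: "D a = (\<Sum>g\<in>\<Gamma>. d g a)" if a: "a \<in> C" for a
    unfolding D_def d_def mP_def mQ_def
    using lnsum[OF a, of Pg] lnsum[OF a, of Qg] P_pos Q_pos a
    by (simp add: C_def sum_subtractf)
  have dloc: "d g a = d g a'" if g: "g \<in> \<Gamma>" and a: "a \<in> C" and a': "a' \<in> C"
      and ag: "\<forall>i\<in>g. a i = a' i" for g a a'
  proof -
    have "moment n K (Pg g) a = moment n K (Pg g) a'"
      using Pg_loc g a a' ag unfolding local_family_def \<Gamma>_def C_def
      by (intro moment_local) auto
    moreover have "moment n K (Qg g) a = moment n K (Qg g) a'"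
      using Qg_loc g a a' ag unfolding local_family_def \<Gamma>_def C_def
      by (intro moment_local) auto
    ultimately show ?thesis by (simp add: d_def)
  qed
  have czero: "c e = 0" if e: "e \<in> C" and ns: "\<forall>g\<in>\<Gamma>. \<not> supp n e \<subseteq> g" for e
  proof -
    have "c e = (\<Sum>a\<in>C. \<Sum>g\<in>\<Gamma>. d g a * bich n a e)"
      unfolding c_def by (intro sum.cong refl) (simp add: Dsum sum_distrib_right)
    also have "\<dots> = (\<Sum>g\<in>\<Gamma>. \<Sum>a\<in>C. d g a * bich n a e)" by (rule sum.swap)
    also have "\<dots> = 0"
    proof (rule sum.neutral, rule ballI)
      fix g assume g: "g \<in> \<Gamma>"
      show "(\<Sum>a\<in>C. d g a * bich n a e) = 0"
        unfolding C_def
      proof (rule locality)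
        fix a a' assume "a \<in> carrierA n K" "a' \<in> carrierA n K" "\<forall>i\<in>g. a i = a' i"
        then show "d g a = d g a'" using dloc[OF g] unfolding C_def by blast
      next
        show "e \<in> carrierA n K" using e unfolding C_def .
      next
        show "\<not> supp n e \<subseteq> g" using ns g by blast
      qed
    qed
    finally show ?thesis .
  qed
  have cinv: "(\<Sum>e\<in>C. bich n a e * c e) = N * D a" if a: "a \<in> C" for a
  proof -
    have "(\<Sum>e\<in>C. bich n a e * c e) = (\<Sum>e\<in>C. bich n e a * (\<Sum>y\<in>C. bich n e y * D y))"
    proof (rule sum.cong[OF refl])
      fix x assume "x \<in> C"
      have "c x = (\<Sum>y\<in>C. bich n x y * D y)"
        unfolding c_def by (intro sum.cong refl) (simp add: bich_sym[of n x] mult.commute)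
      then show "bich n a x * c x = bich n x a * (\<Sum>y\<in>C. bich n x y * D y)"
        by (simp add: bich_sym[of n a])
    qed
    also have "\<dots> = N * D a"
    proof -
      have "a \<in> carrierA n K" using a C_def by simp
      from inversion[OF this, of D] show ?thesis unfolding N_def C_def .
    qed
    finally show ?thesis .
  qed
  have csum: "(\<Sum>u\<in>PM. c (amul e0 u)) = 0" if e0: "e0 \<in> C" for e0
  proof -
    have Dz: "D m = 0" if "m \<in> M" for m
      using agree that by (simp add: D_def mP_def mQ_def)
    have MC: "m \<in> C" if "m \<in> M" for m using sub_C[OF M_sub that] C_def by simp
    have "0 = (\<Sum>m\<in>M. (N * D m) * bich n m e0)" using Dz by simp
    also have "\<dots> = (\<Sum>m\<in>M. \<Sum>e\<in>C. c e * (bich n m e * bich n m e0))"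
      using MC by (intro sum.cong refl) (simp add: cinv[symmetric] sum_distrib_right sum_distrib_left mult_ac)
    also have "\<dots> = (\<Sum>e\<in>C. c e * (\<Sum>m\<in>M. bich n m (amul e e0)))"
      apply (subst sum.swap)
      apply (rule sum.cong[OF refl])
      apply (simp add: sum_distrib_left)
      apply (rule sum.cong[OF refl])
      using MC e0 unfolding C_def by (metis bich_mult)
    also have "\<dots> = (\<Sum>e\<in>C. real (card M) * (if amul e e0 \<in> PM then c e else 0))"
    proof (rule sum.cong[OF refl])
      fix e assume e: "e \<in> C"
      have ee: "amul e e0 \<in> carrierA n K" using mul_in e e0 C_def by blast
      have "(amul e e0 \<in> PM) = (\<forall>m\<in>M. bich n m (amul e e0) = 1)"
        using ee by (auto simp: PM_def perp_def bich_sym)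
      then show "c e * (\<Sum>m\<in>M. bich n m (amul e e0)) = real (card M) * (if amul e e0 \<in> PM then c e else 0)"
        by (simp add: ortho_sub[OF M_sub ee])
    qed
    also have "\<dots> = real (card M) * (\<Sum>e\<in>C. if amul e e0 \<in> PM then c e else 0)"
      by (simp add: sum_distrib_left)
    also have "(\<Sum>e\<in>C. if amul e e0 \<in> PM then c e else 0) = (\<Sum>e\<in>C. if e \<in> PM then c (amul e e0) else 0)"
    proof -
      have "(\<Sum>e\<in>C. if amul e e0 \<in> PM then c e else 0) =
            (\<Sum>e\<in>C. if amul (amul e e0) e0 \<in> PM then c (amul e e0) else 0)"
        using shift_sum[of e0 n K "\<lambda>e. if amul e e0 \<in> PM then c e else 0"] e0 C_def by simp
      also have "\<dots> = (\<Sum>e\<in>C. if e \<in> PM then c (amul e e0) else 0)"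
        using e0 by (intro sum.cong refl) (simp add: amul_cancel C_def)
      finally show ?thesis .
    qed
    also have "(\<Sum>e\<in>C. if e \<in> PM then c (amul e e0) else 0) = (\<Sum>u\<in>PM. c (amul e0 u))"
      using finC PMC by (simp add: sum.inter_restrict[symmetric] Int_absorb1 amul_comm[of e0])
    finally have "real (card M) * (\<Sum>u\<in>PM. c (amul e0 u)) = 0" by simp
    then show ?thesis using sub_card_pos[OF M_sub] by simp
  qed
  have Dperp: "D a = 0" if a: "a \<in> C" and aG: "\<forall>s\<in>G. bich n a s = 1" for a
  proof -
    have inner: "(\<Sum>u\<in>PM. bich n a (amul e u) * c (amul e u)) = 0" if e: "e \<in> C" for e
    proof (cases "\<exists>u0\<in>PM. \<exists>g\<in>\<Gamma>. supp n (amul e u0) \<subseteq> g")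
      case True
      then obtain u0 g2 where u0: "u0 \<in> PM" and g2: "g2 \<in> \<Gamma>" "supp n (amul e u0) \<subseteq> g2" by blast
      have u0C: "u0 \<in> C" using u0 PMC by blast
      have "(\<Sum>u\<in>PM. bich n a (amul e u) * c (amul e u)) = (\<Sum>u\<in>PM. bich n a (amul e u0) * c (amul e u))"
      proof (rule sum.cong[OF refl])
        fix u assume u: "u \<in> PM"
        have uC: "u \<in> C" using u PMC by blast
        show "bich n a (amul e u) * c (amul e u) = bich n a (amul e u0) * c (amul e u)"
        proof (cases "\<exists>g\<in>\<Gamma>. supp n (amul e u) \<subseteq> g")
          case True
          then obtain g1 where g1: "g1 \<in> \<Gamma>" "supp n (amul e u) \<subseteq> g1" by blast
          define w where "w = amul u u0"
          have wPM: "w \<in> PM" unfolding w_def using sub_mul[OF PMsub u u0] .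
          have w_eq: "w = amul (amul e u) (amul e u0)"
            unfolding w_def using amul_cancel2 e uC u0C C_def by metis
          have "supp n w \<subseteq> g1 \<union> g2"
            using supp_mul[of "amul e u" n K "amul e u0"] mul_in e uC u0C g1 g2 w_eq C_def by blast
          then have wG: "w \<in> G" using corr_reg g1 g2 wPM
            unfolding correctable_region_def \<Gamma>_def PM_def by blast
          have wC: "w \<in> C" using wPM PMC by blast
          have "amul e u = amul (amul e u0) w"
            unfolding w_def using amul_cancel2[of u0 n K e u] e uC u0C C_def amul_comm by metis
          then have "bich n a (amul e u) = bich n a (amul e u0) * bich n a w"
            using bich_mult a mul_in e u0C wC C_def by metis
          then show ?thesis using aG wG by simp
        next
          case False
          then have "c (amul e u) = 0" using czero mul_in e uC C_def by blast
          then show ?thesis by simp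
        qed
      qed
      also have "\<dots> = bich n a (amul e u0) * (\<Sum>u\<in>PM. c (amul e u))" by (simp add: sum_distrib_left)
      also have "\<dots> = 0" using csum[OF e] by simp
      finally show ?thesis .
    next
      case False
      have "c (amul e u) = 0" if "u \<in> PM" for u
        using czero False that mul_in e PMC C_def by blast
      then show ?thesis by simp
    qed
    have sh: "(\<Sum>e\<in>C. bich n a e * c e) = (\<Sum>e\<in>C. bich n a (amul e u) * c (amul e u))" if u: "u \<in> PM" for u
      using shift_sum[of u n K "\<lambda>e. bich n a e * c e"] u PMC C_def by auto
    have "real (card PM) * (N * D a) = (\<Sum>u\<in>PM. N * D a)" by simp
    also have "\<dots> = (\<Sum>u\<in>PM. \<Sum>e\<in>C. bich n a (amul e u) * c (amul e u))"
      using sh cinv[OF a] by (intro sum.cong refl) simp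
    also have "\<dots> = (\<Sum>e\<in>C. \<Sum>u\<in>PM. bich n a (amul e u) * c (amul e u))" by (rule sum.swap)
    also have "\<dots> = 0" using inner by simp
    finally show ?thesis using sub_card_pos[OF PMsub] Npos by simp
  qed
  have mom_eq: "mP a = mQ a" if a: "a \<in> C" and aG: "\<forall>s\<in>G. bich n s a = 1" for a
  proof -
    have "D a = 0" using Dperp a aG bich_sym by metis
    then have "ln (mP a) = ln (mQ a)" by (simp add: D_def)
    then show ?thesis using P_pos Q_pos a by (simp add: mP_def mQ_def C_def)
  qed
  show ?thesis
  proof
    fix e assume e: "e \<in> carrierA n K"
    have "N * (\<Sum>s\<in>G. channel n K gs Pg (amul e s)) = N * (\<Sum>s\<in>G. channel n K gs Qg (amul e s))"
      unfolding N_def C_def lc_formula[OF G_sub e]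
      using mom_eq by (intro sum.cong refl) (simp add: mP_def mQ_def C_def)
    then show "logical_channel G (channel n K gs Pg) e = logical_channel G (channel n K gs Qg) e"
      using Npos by (simp add: logical_channel_def)
  qed
qed

end
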